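(* Let $f:\Omega\to\mathbb{C}$ be smooth and let $\hat\Phi=(\Phi_1,\dots,\Phi_m)$ with $\Phi_j:\partial\Omega\to\mathbb{C}$ be given. Let $G$ be the Green function $G(x,x')=E(x,x')-\int_{\partial\Omega}dS(\bar x)E(x,\bar x)(\hat B^{a\dagger}\hat{\mathbf g}^{-1}\hat B\bar E_{x'})(\bar x)$, where $g_{ij}(\bar x,\bar x')=\iint dS(\bar x_1)dS(\bar x_2)\,b_i(\bar x,\bar x_1)E(\bar x_1,\bar x_2)\overline{b^a_j(\bar x',\bar x_2)}$ and $\hat{\mathbf g}$ is assumed invertible. Define $J_{\hat\Phi}=\hat B^{a\dagger}\hat{\mathbf g}^{-1}\hat\Phi$ and $$u(x)=\int_\Omega dV(x_1)\,G(x,x_1)f(x_1)+\int_{\partial\Omega}dS(\bar x)\,E(x,\bar x)\,J_{\hat\Phi}(\bar x).$$ Then $\mathfrak L u=f$ in $\Omega$ and the restriction $\bar u$ of $u$ to $\partial\Omega$ satisfies the inhomogeneous nonlocal boundary conditions $\int_{\partial\Omega}dS(\bar x_1)\,b_j(\bar x,\bar x_1)u(\bar x_1)=\Phi_j(\bar x)$ for all $\bar x\in\partial\Omega$, $j=1,\dots,m$ (i.e. $\hat B\bar u=\hat\Phi$).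
   Context: $\Omega\subset\mathbb{R}^n$ is a domain with boundary $\partial\Omega$, surface measure $dS$, volume measure $dV$. $\mathfrak L$ is a linear differential operator on $\mathbb{R}^n$ with fundamental solution $E$ ($\mathfrak L_xE(x,x')=\delta(x-x')$ on $\mathbb{R}^n$). $\hat B$ and $\hat B^a$ are boundary operators with kernels $b_j$, $b^a_j$ ($j=1,\dots,m$) acting by $(\hat B\varphi)_j(\bar x)=\int_{\partial\Omega}dS(\bar x_1)b_j(\bar x,\bar x_1)\varphi(\bar x_1)$, with adjoint $(\hat B^\dagger\psi)(\bar x)=\sum_j\int_{\partial\Omega}dS(\bar x_1)\overline{b_j(\bar x_1,\bar x)}\psi_j(\bar x_1)$. Matrix operators act by $(\hat{\mathbf g}\psi)_i(\bar x)=\sum_j\int dS(\bar x')g_{ij}(\bar x,\bar x')\psi_j(\bar x')$. $\bar E_{x'}$ is the restriction of $E(\cdot,x')$ to $\partial\Omega$. Standing assumptions: integrals converge and may be interchanged, restrictions to the boundary exist, and $\mathfrak L$ may be applied under the integral signs at interior points. *)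

theory Defs
  imports "HOL-Analysis.Analysis"
begin

(* Points of R^n are  real ^ 'n.  Boundary kernels are indexed by j :: nat, j = 1..m. *)

fun iter_dderiv :: "('a::real_normed_vector) list \<Rightarrow> ('a \<Rightarrow> complex) \<Rightarrow> 'a \<Rightarrow> complex" where
  "iter_dderiv [] f = f"
| "iter_dderiv (v # vs) f = (\<lambda>x. frechet_derivative (iter_dderiv vs f) (at x) v)"

definition smooth_fun_on :: "('a::real_normed_vector) set \<Rightarrow> ('a \<Rightarrow> complex) \<Rightarrow> bool" where
  "smooth_fun_on \<Omega> f \<longleftrightarrow> (\<forall>vs. \<forall>x\<in>\<Omega>. iter_dderiv vs f differentiable (at x))"

definition lin_diff_op ::
  "('a::topological_space) set \<Rightarrow> ('a \<Rightarrow> complex) set \<Rightarrow> (('a \<Rightarrow> complex) \<Rightarrow> ('a \<Rightarrow> complex)) \<Rightarrow> bool" where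
  "lin_diff_op \<Omega> D L \<longleftrightarrow>
     (\<forall>\<phi>\<in>D. \<forall>\<psi>\<in>D. (\<lambda>y. \<phi> y + \<psi> y) \<in> D \<and> (\<forall>x\<in>\<Omega>. L (\<lambda>y. \<phi> y + \<psi> y) x = L \<phi> x + L \<psi> x)) \<and>
     (\<forall>c. \<forall>\<phi>\<in>D. (\<lambda>y. c * \<phi> y) \<in> D \<and> (\<forall>x\<in>\<Omega>. L (\<lambda>y. c * \<phi> y) x = c * L \<phi> x)) \<and>
     (\<forall>\<phi> \<psi>. \<forall>x\<in>\<Omega>. (\<forall>\<^sub>F y in nhds x. \<phi> y = \<psi> y) \<longrightarrow> L \<phi> x = L \<psi> x)"

definition bop :: "'a measure \<Rightarrow> (nat \<Rightarrow> 'a \<Rightarrow> 'a \<Rightarrow> complex) \<Rightarrow> ('a \<Rightarrow> complex) \<Rightarrow> nat \<Rightarrow> 'a \<Rightarrow> complex" where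
  "bop S b \<phi> j xb = (\<integral>x1. b j xb x1 * \<phi> x1 \<partial>S)"

definition badj :: "nat \<Rightarrow> 'a measure \<Rightarrow> (nat \<Rightarrow> 'a \<Rightarrow> 'a \<Rightarrow> complex) \<Rightarrow> (nat \<Rightarrow> 'a \<Rightarrow> complex) \<Rightarrow> 'a \<Rightarrow> complex" where
  "badj m S b \<psi> xb = (\<Sum>j=1..m. \<integral>x1. cnj (b j x1 xb) * \<psi> j x1 \<partial>S)"

definition gker :: "'a measure \<Rightarrow> ('a \<Rightarrow> 'a \<Rightarrow> complex) \<Rightarrow> (nat \<Rightarrow> 'a \<Rightarrow> 'a \<Rightarrow> complex)
                   \<Rightarrow> (nat \<Rightarrow> 'a \<Rightarrow> 'a \<Rightarrow> complex) \<Rightarrow> nat \<Rightarrow> nat \<Rightarrow> 'a \<Rightarrow> 'a \<Rightarrow> complex" where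
  "gker S E b ba i j xb xb' = (\<integral>x1. (\<integral>x2. b i xb x1 * E x1 x2 * cnj (ba j xb' x2) \<partial>S) \<partial>S)"

definition matop :: "nat \<Rightarrow> 'a measure \<Rightarrow> (nat \<Rightarrow> nat \<Rightarrow> 'a \<Rightarrow> 'a \<Rightarrow> complex) \<Rightarrow> (nat \<Rightarrow> 'a \<Rightarrow> complex) \<Rightarrow> nat \<Rightarrow> 'a \<Rightarrow> complex" where
  "matop m S g \<psi> i xb = (\<Sum>j=1..m. \<integral>xb'. g i j xb xb' * \<psi> j xb' \<partial>S)"

definition op_inverse_on :: "nat \<Rightarrow> 'a measure \<Rightarrow> (nat \<Rightarrow> 'a \<Rightarrow> complex) set
     \<Rightarrow> ((nat \<Rightarrow> 'a \<Rightarrow> complex) \<Rightarrow> nat \<Rightarrow> 'a \<Rightarrow> complex)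
     \<Rightarrow> ((nat \<Rightarrow> 'a \<Rightarrow> complex) \<Rightarrow> nat \<Rightarrow> 'a \<Rightarrow> complex) \<Rightarrow> bool" where
  "op_inverse_on m S F gop ginv \<longleftrightarrow>
     (\<forall>\<psi>\<in>F. gop \<psi> \<in> F \<and> ginv \<psi> \<in> F \<and>
        (\<forall>i\<in>{1..m}. \<forall>xb\<in>space S. gop (ginv \<psi>) i xb = \<psi> i xb \<and> ginv (gop \<psi>) i xb = \<psi> i xb))"

text \<open>Correction density  B^{a dagger} g^{-1} B Ebar_{x'}.\<close>
definition kcorr :: "nat \<Rightarrow> 'a measure \<Rightarrow> ('a \<Rightarrow> 'a \<Rightarrow> complex) \<Rightarrow> (nat \<Rightarrow> 'a \<Rightarrow> 'a \<Rightarrow> complex)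
     \<Rightarrow> (nat \<Rightarrow> 'a \<Rightarrow> 'a \<Rightarrow> complex) \<Rightarrow> ((nat \<Rightarrow> 'a \<Rightarrow> complex) \<Rightarrow> nat \<Rightarrow> 'a \<Rightarrow> complex) \<Rightarrow> 'a \<Rightarrow> 'a \<Rightarrow> complex" where
  "kcorr m S E b ba ginv x' = badj m S ba (ginv (bop S b (\<lambda>y. E y x')))"

definition green :: "nat \<Rightarrow> 'a measure \<Rightarrow> ('a \<Rightarrow> 'a \<Rightarrow> complex) \<Rightarrow> (nat \<Rightarrow> 'a \<Rightarrow> 'a \<Rightarrow> complex)
     \<Rightarrow> (nat \<Rightarrow> 'a \<Rightarrow> 'a \<Rightarrow> complex) \<Rightarrow> ((nat \<Rightarrow> 'a \<Rightarrow> complex) \<Rightarrow> nat \<Rightarrow> 'a \<Rightarrow> complex) \<Rightarrow> 'a \<Rightarrow> 'a \<Rightarrow> complex" where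
  "green m S E b ba ginv x x' = E x x' - (\<integral>xb. E x xb * kcorr m S E b ba ginv x' xb \<partial>S)"

definition Jphi :: "nat \<Rightarrow> 'a measure \<Rightarrow> (nat \<Rightarrow> 'a \<Rightarrow> 'a \<Rightarrow> complex)
     \<Rightarrow> ((nat \<Rightarrow> 'a \<Rightarrow> complex) \<Rightarrow> nat \<Rightarrow> 'a \<Rightarrow> complex) \<Rightarrow> (nat \<Rightarrow> 'a \<Rightarrow> complex) \<Rightarrow> 'a \<Rightarrow> complex" where
  "Jphi m S ba ginv \<Phi> = badj m S ba (ginv \<Phi>)"

definition usol :: "nat \<Rightarrow> ('a::euclidean_space) set \<Rightarrow> 'a measure \<Rightarrow> ('a \<Rightarrow> 'a \<Rightarrow> complex)
     \<Rightarrow> (nat \<Rightarrow> 'a \<Rightarrow> 'a \<Rightarrow> complex) \<Rightarrow> (nat \<Rightarrow> 'a \<Rightarrow> 'a \<Rightarrow> complex)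
     \<Rightarrow> ((nat \<Rightarrow> 'a \<Rightarrow> complex) \<Rightarrow> nat \<Rightarrow> 'a \<Rightarrow> complex) \<Rightarrow> ('a \<Rightarrow> complex) \<Rightarrow> (nat \<Rightarrow> 'a \<Rightarrow> complex) \<Rightarrow> 'a \<Rightarrow> complex" where
  "usol m \<Omega> S E b ba ginv f \<Phi> x =
     (\<integral>x1. green m S E b ba ginv x x1 * f x1 \<partial>lebesgue_on \<Omega>)
     + (\<integral>xb. E x xb * Jphi m S ba ginv \<Phi> xb \<partial>S)"

end

theory Submission imports Defs begin

lemma sigma_finite_lebesgue: "sigma_finite_measure (lebesgue :: ('a::euclidean_space) measure)"
proof -
  obtain A :: "'a set set" where A: "countable A" "A \<subseteq> sets lborel" "\<Union>A = space lborel"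
     "\<forall>a\<in>A. emeasure lborel a \<noteq> \<infinity>"
    using sigma_finite_measure.sigma_finite_countable[OF sigma_finite_lborel] by blast
  show ?thesis
    by (rule sigma_finite_measure.intro, rule exI[of _ A]) (use A in auto)
qed

lemma sigma_finite_lebesgue_on:
  assumes "S \<in> sets lebesgue"
  shows "sigma_finite_measure (lebesgue_on (S :: ('a::euclidean_space) set))"
  by (rule sigma_finite_measure_restrict_space[OF sigma_finite_lebesgue assms])

lemma pair_assoc:
  assumes M1: "sigma_finite_measure M1" and M2: "sigma_finite_measure M2"
    and M3: "sigma_finite_measure M3"
  shows "(M1 \<Otimes>\<^sub>M M2) \<Otimes>\<^sub>M M3 = distr (M1 \<Otimes>\<^sub>M (M2 \<Otimes>\<^sub>M M3)) ((M1 \<Otimes>\<^sub>M M2) \<Otimes>\<^sub>M M3) (\<lambda>(x,y,z). ((x,y),z))"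
proof (rule pair_measure_eqI)
  show "sigma_finite_measure (M1 \<Otimes>\<^sub>M M2)" by (rule sigma_finite_pair_measure[OF M1 M2])
  show "sigma_finite_measure M3" by fact
  show "sets ((M1 \<Otimes>\<^sub>M M2) \<Otimes>\<^sub>M M3) = sets (distr (M1 \<Otimes>\<^sub>M (M2 \<Otimes>\<^sub>M M3)) ((M1 \<Otimes>\<^sub>M M2) \<Otimes>\<^sub>M M3) (\<lambda>(x,y,z). ((x,y),z)))"
    by simp
  fix A B assume A: "A \<in> sets (M1 \<Otimes>\<^sub>M M2)" and B: "B \<in> sets M3"
  interpret s1: sigma_finite_measure M1 by fact
  interpret s2: sigma_finite_measure M2 by fact
  interpret s3: sigma_finite_measure M3 by fact
  interpret s23: sigma_finite_measure "M2 \<Otimes>\<^sub>M M3" by (rule sigma_finite_pair_measure[OF M2 M3])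
  have meas: "(\<lambda>(x,y,z). ((x,y),z)) \<in> measurable (M1 \<Otimes>\<^sub>M (M2 \<Otimes>\<^sub>M M3)) ((M1 \<Otimes>\<^sub>M M2) \<Otimes>\<^sub>M M3)"
    by measurable
  let ?X = "(\<lambda>(x,y,z). ((x,y),z)) -` (A \<times> B) \<inter> space (M1 \<Otimes>\<^sub>M (M2 \<Otimes>\<^sub>M M3))"
  have X: "?X \<in> sets (M1 \<Otimes>\<^sub>M (M2 \<Otimes>\<^sub>M M3))"
    using meas A B by (intro measurable_sets[OF meas]) auto
  have "emeasure (distr (M1 \<Otimes>\<^sub>M (M2 \<Otimes>\<^sub>M M3)) ((M1 \<Otimes>\<^sub>M M2) \<Otimes>\<^sub>M M3) (\<lambda>(x,y,z). ((x,y),z))) (A \<times> B)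
     = emeasure (M1 \<Otimes>\<^sub>M (M2 \<Otimes>\<^sub>M M3)) ?X"
    using meas A B by (subst emeasure_distr) auto
  also have "\<dots> = (\<integral>\<^sup>+x. emeasure (M2 \<Otimes>\<^sub>M M3) (Pair x -` ?X) \<partial>M1)"
    by (rule s23.emeasure_pair_measure_alt[OF X])
  also have "\<dots> = (\<integral>\<^sup>+x. emeasure M2 (Pair x -` A) * emeasure M3 B \<partial>M1)"
  proof (rule nn_integral_cong)
    fix x assume x: "x \<in> space M1"
    have "Pair x -` ?X = (Pair x -` A) \<times> B"
      using x A[THEN sets.sets_into_space] B[THEN sets.sets_into_space]
      by (auto simp: space_pair_measure)
    then show "emeasure (M2 \<Otimes>\<^sub>M M3) (Pair x -` ?X) = emeasure M2 (Pair x -` A) * emeasure M3 B"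
      using A B by (simp add: s3.emeasure_pair_measure_Times sets_Pair1)
  qed
  also have "\<dots> = (\<integral>\<^sup>+x. emeasure M2 (Pair x -` A) \<partial>M1) * emeasure M3 B"
    using A by (intro nn_integral_multc) (rule s2.measurable_emeasure_Pair)
  also have "\<dots> = emeasure (M1 \<Otimes>\<^sub>M M2) A * emeasure M3 B"
    using A by (simp add: s2.emeasure_pair_measure_alt)
  finally show "emeasure (M1 \<Otimes>\<^sub>M M2) A * emeasure M3 B = emeasure (distr (M1 \<Otimes>\<^sub>M (M2 \<Otimes>\<^sub>M M3)) ((M1 \<Otimes>\<^sub>M M2) \<Otimes>\<^sub>M M3) (\<lambda>(x,y,z). ((x,y),z))) (A \<times> B)"
    by simp
qed

lemma triple_B:
  fixes G :: "'a \<times> 'a \<times> 'a \<Rightarrow> 'b::{banach, second_countable_topology}"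
  assumes M: "sigma_finite_measure M" and G: "integrable (M \<Otimes>\<^sub>M M \<Otimes>\<^sub>M M) G"
  shows "(\<integral>x2. (\<integral>x1. (\<integral>y. G (x1, y, x2) \<partial>M) \<partial>M) \<partial>M) = integral\<^sup>L (M \<Otimes>\<^sub>M M \<Otimes>\<^sub>M M) G"
proof -
  interpret sM: sigma_finite_measure M by fact
  interpret pMM: pair_sigma_finite M M ..
  interpret sMM: sigma_finite_measure "M \<Otimes>\<^sub>M M" by (rule sigma_finite_pair_measure[OF M M])
  interpret pP: pair_sigma_finite "M \<Otimes>\<^sub>M M" M ..
  have Gm[measurable]: "G \<in> borel_measurable (M \<Otimes>\<^sub>M M \<Otimes>\<^sub>M M)" using G by auto
  define G' where "G' = (\<lambda>((x1::'a,y::'a),x2::'a). G (x1,(y,x2)))"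
  have al[measurable]: "(\<lambda>(x,y,z). ((x,y),z)) \<in> measurable (M \<Otimes>\<^sub>M (M \<Otimes>\<^sub>M M)) ((M \<Otimes>\<^sub>M M) \<Otimes>\<^sub>M M)"
    by measurable
  have be: "(\<lambda>p::('a\<times>'a)\<times>'a. (fst (fst p), (snd (fst p), snd p))) \<in> measurable ((M \<Otimes>\<^sub>M M) \<Otimes>\<^sub>M M) (M \<Otimes>\<^sub>M (M \<Otimes>\<^sub>M M))"
    by measurable
  have G'eq: "G' = (\<lambda>p. G ((\<lambda>p::('a\<times>'a)\<times>'a. (fst (fst p), (snd (fst p), snd p))) p))"
    by (auto simp: G'_def)
  have G'm[measurable]: "G' \<in> borel_measurable ((M \<Otimes>\<^sub>M M) \<Otimes>\<^sub>M M)"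
    unfolding G'eq by (rule measurable_compose[OF be Gm])
  have comp: "(\<lambda>p. G' ((\<lambda>(x,y,z). ((x,y),z)) p)) = G"
    by (auto simp: G'_def)
  have G'i: "integrable ((M \<Otimes>\<^sub>M M) \<Otimes>\<^sub>M M) G'"
    apply (subst pair_assoc[OF M M M])
    apply (subst integrable_distr_eq[OF al G'm])
    using G comp by simp
  have "integral\<^sup>L ((M \<Otimes>\<^sub>M M) \<Otimes>\<^sub>M M) G' = integral\<^sup>L (M \<Otimes>\<^sub>M M \<Otimes>\<^sub>M M) G"
    apply (subst pair_assoc[OF M M M])
    apply (subst integral_distr[OF al G'm])
    using comp by simp
  moreover have "(\<integral>x2. (\<integral>p. G' (p, x2) \<partial>(M \<Otimes>\<^sub>M M)) \<partial>M) = integral\<^sup>L ((M \<Otimes>\<^sub>M M) \<Otimes>\<^sub>M M) G'"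
    using pP.integral_snd[of "\<lambda>p x2. G' (p, x2)"] G'i by simp
  moreover have "(\<integral>x2. (\<integral>x1. (\<integral>y. G (x1, y, x2) \<partial>M) \<partial>M) \<partial>M) = (\<integral>x2. (\<integral>p. G' (p, x2) \<partial>(M \<Otimes>\<^sub>M M)) \<partial>M)"
  proof (rule integral_cong_AE)
    show "(\<lambda>x2. \<integral>x1. \<integral>y. G (x1, y, x2) \<partial>M \<partial>M) \<in> borel_measurable M" by measurable
    show "(\<lambda>x2. \<integral>p. G' (p, x2) \<partial>(M \<Otimes>\<^sub>M M)) \<in> borel_measurable M" by measurable
    show "AE x2 in M. (\<integral>x1. \<integral>y. G (x1, y, x2) \<partial>M \<partial>M) = (\<integral>p. G' (p, x2) \<partial>(M \<Otimes>\<^sub>M M))"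
      using pP.AE_integrable_snd[of "\<lambda>p x2. G' (p, x2)"] G'i
    proof -
      have "AE x2 in M. integrable (M \<Otimes>\<^sub>M M) (\<lambda>p. G' (p, x2))"
        using pP.AE_integrable_snd[of "\<lambda>p x2. G' (p, x2)"] G'i by simp
      then show ?thesis
      proof eventually_elim
        case (elim x2)
        show ?case using pMM.integral_fst'[OF elim] by (simp add: G'_def)
      qed
    qed
  qed
  ultimately show ?thesis by simp
qed

lemma core:
  fixes S :: "'a measure" and E :: "'a \<Rightarrow> 'a \<Rightarrow> complex" and \<beta> :: "'a \<Rightarrow> complex"
    and ba :: "nat \<Rightarrow> 'a \<Rightarrow> 'a \<Rightarrow> complex" and \<psi> :: "nat \<Rightarrow> 'a \<Rightarrow> complex"
  assumes S: "sigma_finite_measure S"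
    and tri: "\<forall>k\<in>{1..m}. integrable (S \<Otimes>\<^sub>M S \<Otimes>\<^sub>M S) (\<lambda>(x1, y, x2). \<beta> x1 * E x1 y * cnj (ba k x2 y) * \<psi> k x2)"
    and LI: "integrable S (\<lambda>x1. \<beta> x1 * (\<integral>y. E x1 y * badj m S ba \<psi> y \<partial>S))"
  shows "(\<integral>x1. \<beta> x1 * (\<integral>y. E x1 y * badj m S ba \<psi> y \<partial>S) \<partial>S)
       = (\<Sum>k=1..m. \<integral>xb'. (\<integral>x1. (\<integral>x2. \<beta> x1 * E x1 x2 * cnj (ba k xb' x2) \<partial>S) \<partial>S) * \<psi> k xb' \<partial>S)"
proof -
  interpret sS: sigma_finite_measure S by fact
  interpret pSS: pair_sigma_finite S S ..
  interpret sSS: sigma_finite_measure "S \<Otimes>\<^sub>M S" by (rule sigma_finite_pair_measure[OF S S])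
  interpret p3: pair_sigma_finite S "S \<Otimes>\<^sub>M S" ..
  define F where "F k = (\<lambda>(x1, y, x2). \<beta> x1 * E x1 y * cnj (ba k x2 y) * \<psi> k x2)" for k
  have Fi: "integrable (S \<Otimes>\<^sub>M S \<Otimes>\<^sub>M S) (F k)" if "k \<in> {1..m}" for k
    using tri that by (simp add: F_def)
  have R: "(\<integral>xb'. (\<integral>x1. (\<integral>x2. \<beta> x1 * E x1 x2 * cnj (ba k xb' x2) \<partial>S) \<partial>S) * \<psi> k xb' \<partial>S)
      = integral\<^sup>L (S \<Otimes>\<^sub>M S \<Otimes>\<^sub>M S) (F k)" if k: "k \<in> {1..m}" for k
  proof -
    have "(\<integral>xb'. (\<integral>x1. (\<integral>x2. \<beta> x1 * E x1 x2 * cnj (ba k xb' x2) \<partial>S) \<partial>S) * \<psi> k xb' \<partial>S)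
       = (\<integral>xb'. (\<integral>x1. (\<integral>y. F k (x1, y, xb') \<partial>S) \<partial>S) \<partial>S)"
      by (simp add: F_def)
    also have "\<dots> = integral\<^sup>L (S \<Otimes>\<^sub>M S \<Otimes>\<^sub>M S) (F k)"
      by (rule triple_B[OF S Fi[OF k]])
    finally show ?thesis .
  qed
  have AEi: "AE x1 in S. \<forall>k\<in>{1..m}. integrable (S \<Otimes>\<^sub>M S) (\<lambda>p. F k (x1, p))"
    by (rule AE_finite_allI) (auto intro: p3.AE_integrable_fst'[OF Fi])
  have L: "(\<integral>x1. \<beta> x1 * (\<integral>y. E x1 y * badj m S ba \<psi> y \<partial>S) \<partial>S)
     = (\<integral>x1. (\<Sum>k=1..m. \<integral>p. F k (x1, p) \<partial>(S \<Otimes>\<^sub>M S)) \<partial>S)"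
  proof (rule integral_cong_AE)
    show "(\<lambda>x1. \<beta> x1 * (\<integral>y. E x1 y * badj m S ba \<psi> y \<partial>S)) \<in> borel_measurable S"
      using LI by auto
    show "(\<lambda>x1. \<Sum>k=1..m. \<integral>p. F k (x1, p) \<partial>(S \<Otimes>\<^sub>M S)) \<in> borel_measurable S"
      using p3.integrable_fst'[OF Fi] by (intro borel_measurable_sum) auto
    show "AE x1 in S. \<beta> x1 * (\<integral>y. E x1 y * badj m S ba \<psi> y \<partial>S) = (\<Sum>k=1..m. \<integral>p. F k (x1, p) \<partial>(S \<Otimes>\<^sub>M S))"
      using AEi
    proof eventually_elim
      case (elim x1)
      have pt: "\<beta> x1 * (E x1 y * badj m S ba \<psi> y) = (\<Sum>k=1..m. \<integral>x2. F k (x1, y, x2) \<partial>S)" for y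
        by (simp add: badj_def F_def sum_distrib_left mult.assoc)
      have "\<beta> x1 * (\<integral>y. E x1 y * badj m S ba \<psi> y \<partial>S) = (\<integral>y. (\<Sum>k=1..m. \<integral>x2. F k (x1, y, x2) \<partial>S) \<partial>S)"
        by (simp only: pt[symmetric] integral_mult_right_zero)
      also have "\<dots> = (\<Sum>k=1..m. \<integral>y. (\<integral>x2. F k (x1, y, x2) \<partial>S) \<partial>S)"
      proof (rule Bochner_Integration.integral_sum[where f="\<lambda>k y. \<integral>x2. F k (x1, y, x2) \<partial>S"])
        fix k assume "k \<in> {1..m}"
        then have "integrable (S \<Otimes>\<^sub>M S) (\<lambda>p. F k (x1, p))" using elim by auto
        from pSS.integrable_fst'[OF this] show "integrable S (\<lambda>y. \<integral>x2. F k (x1, y, x2) \<partial>S)" by simp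
      qed
      also have "\<dots> = (\<Sum>k=1..m. \<integral>p. F k (x1, p) \<partial>(S \<Otimes>\<^sub>M S))"
      proof (rule sum.cong[OF refl])
        fix k assume "k \<in> {1..m}"
        then have "integrable (S \<Otimes>\<^sub>M S) (\<lambda>p. F k (x1, p))" using elim by auto
        from pSS.integral_fst'[OF this] show "(\<integral>y. (\<integral>x2. F k (x1, y, x2) \<partial>S) \<partial>S) = (\<integral>p. F k (x1, p) \<partial>(S \<Otimes>\<^sub>M S))" by simp
      qed
      finally show ?case .
    qed
  qed
  also have "\<dots> = (\<Sum>k=1..m. \<integral>x1. (\<integral>p. F k (x1, p) \<partial>(S \<Otimes>\<^sub>M S)) \<partial>S)"
    by (rule Bochner_Integration.integral_sum[where f="\<lambda>k x1. \<integral>p. F k (x1, p) \<partial>(S \<Otimes>\<^sub>M S)"]) (auto intro: p3.integrable_fst'[OF Fi])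
  also have "\<dots> = (\<Sum>k=1..m. integral\<^sup>L (S \<Otimes>\<^sub>M S \<Otimes>\<^sub>M S) (F k))"
    by (intro sum.cong refl) (auto intro: p3.integral_fst'[OF Fi])
  finally show ?thesis using R by simp
qed

theorem mainTheorem5:
  fixes \<Omega> :: "(real ^ 'n) set"
    and S :: "(real ^ 'n) measure"
    and L :: "((real ^ 'n) \<Rightarrow> complex) \<Rightarrow> ((real ^ 'n) \<Rightarrow> complex)"
    and D :: "((real ^ 'n) \<Rightarrow> complex) set"
    and E :: "real ^ 'n \<Rightarrow> real ^ 'n \<Rightarrow> complex"
    and m :: nat
    and b ba :: "nat \<Rightarrow> real ^ 'n \<Rightarrow> real ^ 'n \<Rightarrow> complex"
    and F :: "(nat \<Rightarrow> real ^ 'n \<Rightarrow> complex) set"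
    and ginv :: "(nat \<Rightarrow> real ^ 'n \<Rightarrow> complex) \<Rightarrow> nat \<Rightarrow> real ^ 'n \<Rightarrow> complex"
    and f :: "real ^ 'n \<Rightarrow> complex"
    and \<Phi> :: "nat \<Rightarrow> real ^ 'n \<Rightarrow> complex"
  assumes domain: "open \<Omega>" "connected \<Omega>" "\<Omega> \<noteq> {}"
    and surface: "sigma_finite_measure S" "space S = frontier \<Omega>"
    and Lop: "lin_diff_op \<Omega> D L"
    and fund_offdiag: "\<forall>x x'. x \<noteq> x' \<longrightarrow> L (\<lambda>y. E y x') x = 0"
    and fund_delta: "\<forall>x\<in>\<Omega>. L (\<lambda>y. \<integral>x1. E y x1 * f x1 \<partial>lebesgue_on \<Omega>) x = f x"
    and f_smooth: "smooth_fun_on \<Omega> f"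
    and g_inv: "op_inverse_on m S F (matop m S (gker S E b ba)) ginv"
    and Phi_F: "\<Phi> \<in> F"
    and BE_F: "\<forall>x'\<in>\<Omega>. bop S b (\<lambda>y. E y x') \<in> F"
    (* standing assumptions: convergence of the integrals in the interior *)
    and int_int: "\<forall>y\<in>\<Omega>. integrable (lebesgue_on \<Omega>) (\<lambda>x1. E y x1 * f x1)
        \<and> integrable (lebesgue_on \<Omega>) (\<lambda>x1. (\<integral>xb. E y xb * kcorr m S E b ba ginv x1 xb \<partial>S) * f x1)"
    (* standing assumptions: L may be applied to / under the integral signs at interior points *)
    and dom1: "(\<lambda>y. \<integral>x1. E y x1 * f x1 \<partial>lebesgue_on \<Omega>) \<in> D"
    and dom2: "(\<lambda>y. \<integral>x1. (\<integral>xb. E y xb * kcorr m S E b ba ginv x1 xb \<partial>S) * f x1 \<partial>lebesgue_on \<Omega>) \<in> D"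
    and dom3: "(\<lambda>y. \<integral>xb. E y xb * Jphi m S ba ginv \<Phi> xb \<partial>S) \<in> D"
    and under1: "\<forall>x\<in>\<Omega>.
        L (\<lambda>y. \<integral>x1. (\<integral>xb. E y xb * kcorr m S E b ba ginv x1 xb \<partial>S) * f x1 \<partial>lebesgue_on \<Omega>) x
        = (\<integral>x1. (\<integral>xb. L (\<lambda>y. E y xb) x * kcorr m S E b ba ginv x1 xb \<partial>S) * f x1 \<partial>lebesgue_on \<Omega>)"
    and under2: "\<forall>x\<in>\<Omega>.
        L (\<lambda>y. \<integral>xb. E y xb * Jphi m S ba ginv \<Phi> xb \<partial>S) x
        = (\<integral>xb. L (\<lambda>y. E y xb) x * Jphi m S ba ginv \<Phi> xb \<partial>S)"
    (* standing assumptions: convergence / interchangeability of the integrals on the boundary *)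
    and bd_int: "\<forall>j\<in>{1..m}. \<forall>xb\<in>frontier \<Omega>.
        integrable S (\<lambda>x1. b j xb x1 * (\<integral>x'. green m S E b ba ginv x1 x' * f x' \<partial>lebesgue_on \<Omega>))
      \<and> integrable S (\<lambda>x1. b j xb x1 * (\<integral>y. E x1 y * Jphi m S ba ginv \<Phi> y \<partial>S))
      \<and> integrable (S \<Otimes>\<^sub>M lebesgue_on \<Omega>) (\<lambda>(x1, x'). b j xb x1 * green m S E b ba ginv x1 x' * f x')
      \<and> (\<forall>x'\<in>\<Omega>. integrable S (\<lambda>x1. b j xb x1 * E x1 x')
           \<and> integrable S (\<lambda>x1. b j xb x1 * (\<integral>y. E x1 y * kcorr m S E b ba ginv x' y \<partial>S)))
      \<and> (\<forall>k\<in>{1..m}. \<forall>\<psi>\<in>insert (ginv \<Phi>) ((\<lambda>x'. ginv (bop S b (\<lambda>y. E y x'))) ` \<Omega>).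
           integrable (S \<Otimes>\<^sub>M S \<Otimes>\<^sub>M S)
             (\<lambda>(x1, y, x2). b j xb x1 * E x1 y * cnj (ba k x2 y) * \<psi> k x2))"
  shows "(\<forall>x\<in>\<Omega>. L (usol m \<Omega> S E b ba ginv f \<Phi>) x = f x)
       \<and> (\<forall>j\<in>{1..m}. \<forall>xb\<in>frontier \<Omega>. bop S b (usol m \<Omega> S E b ba ginv f \<Phi>) j xb = \<Phi> j xb)"
proof -
  have Sx: "sigma_finite_measure S" by (rule surface(1))
  have Omeas: "\<Omega> \<in> sets lebesgue" using domain(1) by (simp add: borel_open)
  have sL: "sigma_finite_measure (lebesgue_on \<Omega>)" by (rule sigma_finite_lebesgue_on[OF Omeas])
  have spL: "space (lebesgue_on \<Omega>) = \<Omega>" by simp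
  have disj: "x \<noteq> xb" if "x \<in> \<Omega>" "xb \<in> frontier \<Omega>" for x xb
    using that domain(1) by (auto simp: frontier_def interior_open)
  have Lzero: "L (\<lambda>y. E y xb) x = 0" if "x \<in> \<Omega>" "xb \<in> space S" for x xb
    using fund_offdiag disj[OF that(1)] that(2) surface(2) by auto
  note Ld = Lop[unfolded lin_diff_op_def]
  define A where "A = (\<lambda>y. \<integral>x1. E y x1 * f x1 \<partial>lebesgue_on \<Omega>)"
  define B where "B = (\<lambda>y. \<integral>x1. (\<integral>xb. E y xb * kcorr m S E b ba ginv x1 xb \<partial>S) * f x1 \<partial>lebesgue_on \<Omega>)"
  define C where "C = (\<lambda>y. \<integral>xb. E y xb * Jphi m S ba ginv \<Phi> xb \<partial>S)"
  have AD: "A \<in> D" using dom1 by (simp add: A_def)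
  have BD: "B \<in> D" using dom2 by (simp add: B_def)
  have CD: "C \<in> D" using dom3 by (simp add: C_def)
  have addD: "(\<lambda>y. \<phi> y + \<psi> y) \<in> D" if "\<phi> \<in> D" "\<psi> \<in> D" for \<phi> \<psi>
    using Ld that by blast
  have addL: "L (\<lambda>y. \<phi> y + \<psi> y) x = L \<phi> x + L \<psi> x" if "\<phi> \<in> D" "\<psi> \<in> D" "x \<in> \<Omega>" for \<phi> \<psi> x
    using Ld that by blast
  have smD: "(\<lambda>y. c * \<phi> y) \<in> D" if "\<phi> \<in> D" for \<phi> c
    using Ld that by blast
  have smL: "L (\<lambda>y. c * \<phi> y) x = c * L \<phi> x" if "\<phi> \<in> D" "x \<in> \<Omega>" for \<phi> c x
    using Ld that by blast
  have locL: "L \<phi> x = L \<psi> x" if "\<forall>\<^sub>F y in nhds x. \<phi> y = \<psi> y" "x \<in> \<Omega>" for \<phi> \<psi> x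
    using Ld that by blast
  have mBD: "(\<lambda>y. (-1) * B y) \<in> D" using smD[OF BD] .
  have ABD: "(\<lambda>y. A y + (-1) * B y) \<in> D" using addD[OF AD mBD] .
  have usol_eq: "usol m \<Omega> S E b ba ginv f \<Phi> y = (A y + (-1) * B y) + C y" if y: "y \<in> \<Omega>" for y
  proof -
    have "(\<integral>x1. green m S E b ba ginv y x1 * f x1 \<partial>lebesgue_on \<Omega>)
        = (\<integral>x1. E y x1 * f x1 - (\<integral>xb. E y xb * kcorr m S E b ba ginv x1 xb \<partial>S) * f x1 \<partial>lebesgue_on \<Omega>)"
      by (simp add: green_def left_diff_distrib)
    also have "\<dots> = A y - B y"
      unfolding A_def B_def using int_int y by (intro Bochner_Integration.integral_diff) auto
    finally show ?thesis by (simp add: usol_def C_def)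
  qed
  have part1: "\<forall>x\<in>\<Omega>. L (usol m \<Omega> S E b ba ginv f \<Phi>) x = f x"
  proof
    fix x assume x: "x \<in> \<Omega>"
    have ev: "\<forall>\<^sub>F y in nhds x. usol m \<Omega> S E b ba ginv f \<Phi> y = (\<lambda>y. (A y + (-1) * B y) + C y) y"
      using eventually_nhds_in_open[OF domain(1) x] by eventually_elim (simp add: usol_eq)
    have "L (usol m \<Omega> S E b ba ginv f \<Phi>) x = L (\<lambda>y. (A y + (-1) * B y) + C y) x"
      by (rule locL[OF _ x]) (use ev in simp)
    also have "\<dots> = L (\<lambda>y. A y + (-1) * B y) x + L C x"
      using addL[OF ABD CD x] .
    also have "L (\<lambda>y. A y + (-1) * B y) x = L A x + L (\<lambda>y. (-1) * B y) x"
      using addL[OF AD mBD x] .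
    also have "L (\<lambda>y. (-1) * B y) x = (-1) * L B x"
      using smL[OF BD x] .
    also have "L A x = f x" using fund_delta x by (simp add: A_def)
    also have "L B x = 0"
    proof -
      have "L B x = (\<integral>x1. (\<integral>xb. L (\<lambda>y. E y xb) x * kcorr m S E b ba ginv x1 xb \<partial>S) * f x1 \<partial>lebesgue_on \<Omega>)"
        using under1 x by (simp add: B_def)
      also have "\<dots> = (\<integral>x1. 0 \<partial>lebesgue_on \<Omega>)"
      proof (rule Bochner_Integration.integral_cong[OF refl])
        fix x1
        have "(\<integral>xb. L (\<lambda>y. E y xb) x * kcorr m S E b ba ginv x1 xb \<partial>S) = (\<integral>xb. 0 \<partial>S)"
          by (rule Bochner_Integration.integral_cong[OF refl]) (simp add: Lzero[OF x])
        then show "(\<integral>xb. L (\<lambda>y. E y xb) x * kcorr m S E b ba ginv x1 xb \<partial>S) * f x1 = 0" by simp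
      qed
      finally show ?thesis by simp
    qed
    also have "L C x = 0"
    proof -
      have "L C x = (\<integral>xb. L (\<lambda>y. E y xb) x * Jphi m S ba ginv \<Phi> xb \<partial>S)"
        using under2 x by (simp add: C_def)
      also have "\<dots> = (\<integral>xb. 0 \<partial>S)"
        by (rule Bochner_Integration.integral_cong[OF refl]) (simp add: Lzero[OF x])
      finally show ?thesis by simp
    qed
    finally show "L (usol m \<Omega> S E b ba ginv f \<Phi>) x = f x" by simp
  qed
  have part2: "\<forall>j\<in>{1..m}. \<forall>xb\<in>frontier \<Omega>. bop S b (usol m \<Omega> S E b ba ginv f \<Phi>) j xb = \<Phi> j xb"
  proof (intro ballI)
    fix j xb assume j: "j \<in> {1..m}" and xb: "xb \<in> frontier \<Omega>"
    note bi = bd_int[rule_format, OF j xb]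
    have xbS: "xb \<in> space S" using xb surface(2) by simp
    have gi: "matop m S (gker S E b ba) (ginv \<psi>) j xb = \<psi> j xb" if "\<psi> \<in> F" for \<psi>
      using g_inv that j xbS unfolding op_inverse_on_def by blast
    have coreapp: "(\<integral>x1. b j xb x1 * (\<integral>y. E x1 y * badj m S ba \<psi> y \<partial>S) \<partial>S)
        = matop m S (gker S E b ba) \<psi> j xb"
      if tri: "\<forall>k\<in>{1..m}. integrable (S \<Otimes>\<^sub>M S \<Otimes>\<^sub>M S) (\<lambda>(x1, y, x2). b j xb x1 * E x1 y * cnj (ba k x2 y) * \<psi> k x2)"
        and LI: "integrable S (\<lambda>x1. b j xb x1 * (\<integral>y. E x1 y * badj m S ba \<psi> y \<partial>S))" for \<psi>
      using core[OF Sx tri LI] by (simp add: matop_def gker_def)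
    define P where "P = (\<lambda>x1. \<integral>x'. green m S E b ba ginv x1 x' * f x' \<partial>lebesgue_on \<Omega>)"
    define Q where "Q = (\<lambda>x1. \<integral>y. E x1 y * Jphi m S ba ginv \<Phi> y \<partial>S)"
    have "bop S b (usol m \<Omega> S E b ba ginv f \<Phi>) j xb = (\<integral>x1. b j xb x1 * P x1 + b j xb x1 * Q x1 \<partial>S)"
      by (simp add: bop_def usol_def P_def Q_def distrib_left)
    also have "\<dots> = (\<integral>x1. b j xb x1 * P x1 \<partial>S) + (\<integral>x1. b j xb x1 * Q x1 \<partial>S)"
      using bi by (intro Bochner_Integration.integral_add) (auto simp: P_def Q_def)
    also have "(\<integral>x1. b j xb x1 * Q x1 \<partial>S) = \<Phi> j xb"
    proof -
      have "(\<integral>x1. b j xb x1 * Q x1 \<partial>S) = matop m S (gker S E b ba) (ginv \<Phi>) j xb"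
        unfolding Q_def Jphi_def
        by (rule coreapp) (use bi in \<open>auto simp: Jphi_def\<close>)
      then show ?thesis using gi[OF Phi_F] by simp
    qed
    also have "(\<integral>x1. b j xb x1 * P x1 \<partial>S) = 0"
    proof -
      interpret pSL: pair_sigma_finite S "lebesgue_on \<Omega>"
        by (intro pair_sigma_finite.intro Sx sL)
      have I3: "integrable (S \<Otimes>\<^sub>M lebesgue_on \<Omega>) (\<lambda>(x1, x'). b j xb x1 * green m S E b ba ginv x1 x' * f x')"
        using bi by blast
      have "(\<integral>x1. b j xb x1 * P x1 \<partial>S) = (\<integral>x1. (\<integral>x'. b j xb x1 * green m S E b ba ginv x1 x' * f x' \<partial>lebesgue_on \<Omega>) \<partial>S)"
        by (simp add: P_def mult.assoc)
      also have "\<dots> = (\<integral>x'. (\<integral>x1. b j xb x1 * green m S E b ba ginv x1 x' * f x' \<partial>S) \<partial>lebesgue_on \<Omega>)"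
        using pSL.Fubini_integral[of "\<lambda>x1 x'. b j xb x1 * green m S E b ba ginv x1 x' * f x'"] I3
        by simp
      also have "\<dots> = (\<integral>x'. 0 \<partial>lebesgue_on \<Omega>)"
      proof (rule Bochner_Integration.integral_cong[OF refl])
        fix x' assume "x' \<in> space (lebesgue_on \<Omega>)"
        then have x': "x' \<in> \<Omega>" by simp
        note bi2 = bi[THEN conjunct2, THEN conjunct2, THEN conjunct2]
        have i1: "integrable S (\<lambda>x1. b j xb x1 * E x1 x')"
          and i2: "integrable S (\<lambda>x1. b j xb x1 * (\<integral>y. E x1 y * kcorr m S E b ba ginv x' y \<partial>S))"
          using bi2 x' by auto
        define \<psi>0 where "\<psi>0 = bop S b (\<lambda>y. E y x')"
        have \<psi>0F: "\<psi>0 \<in> F" using BE_F x' by (simp add: \<psi>0_def)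
        have kc: "kcorr m S E b ba ginv x' = badj m S ba (ginv \<psi>0)"
          by (simp add: kcorr_def \<psi>0_def)
        have "(\<integral>x1. b j xb x1 * green m S E b ba ginv x1 x' \<partial>S)
            = (\<integral>x1. b j xb x1 * E x1 x' - b j xb x1 * (\<integral>y. E x1 y * kcorr m S E b ba ginv x' y \<partial>S) \<partial>S)"
          by (simp add: green_def right_diff_distrib)
        also have "\<dots> = (\<integral>x1. b j xb x1 * E x1 x' \<partial>S) - (\<integral>x1. b j xb x1 * (\<integral>y. E x1 y * kcorr m S E b ba ginv x' y \<partial>S) \<partial>S)"
          using i1 i2 by (rule Bochner_Integration.integral_diff)
        also have "(\<integral>x1. b j xb x1 * E x1 x' \<partial>S) = \<psi>0 j xb"
          by (simp add: \<psi>0_def bop_def)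
        also have "(\<integral>x1. b j xb x1 * (\<integral>y. E x1 y * kcorr m S E b ba ginv x' y \<partial>S) \<partial>S) = \<psi>0 j xb"
        proof -
          have "(\<integral>x1. b j xb x1 * (\<integral>y. E x1 y * kcorr m S E b ba ginv x' y \<partial>S) \<partial>S)
              = matop m S (gker S E b ba) (ginv \<psi>0) j xb"
            unfolding kc
            by (rule coreapp) (use bi2 x' i2 kc in \<open>auto simp: \<psi>0_def\<close>)
          then show ?thesis using gi[OF \<psi>0F] by simp
        qed
        finally show "(\<integral>x1. b j xb x1 * green m S E b ba ginv x1 x' * f x' \<partial>S) = 0"
          by simp
      qed
      finally show ?thesis by simp
    qed
    finally show "bop S b (usol m \<Omega> S E b ba ginv f \<Phi>) j xb = \<Phi> j xb" by simp
  qed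
  show ?thesis using part1 part2 by blast
qed

end
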